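(* Let $A$ and $C$ be machines. There exists a machine $B$ such that $B$ is a functional reduction of $A$ and $C$ is a state reduction of $B$ if and only if there exists a machine $B'$ such that $B'$ is a state reduction of $A$ and $C$ is a functional reduction of $B'$.
   Context: For a set $S$, a transition function on $S$ is a function $S\to S$, and $\Phi_S$ denotes the set of all of them. A machine $S\times\Phi'_S$ is a pair consisting of a set $S$ and a subset $\Phi'_S\subseteq\Phi_S$. Functional reduction: given machines $S\times\Phi'_1$ and $S\times\Phi'_2$ on the same state set, the latter is a functional reduction of the former iff $\Phi'_2\subseteq\Phi'_1$. State reduction: given machines $S\times\Phi'_S$ and $S'\times\Phi'_{S'}$, the latter is a state reduction of the former iff (1) $S'\subseteq S$; (2) for every $\varphi'\in\Phi'_{S'}$ there exists $\varphi\in\Phi'_S$ with $\varphi'(s)=\varphi(s)$ for all $s\in S'$; (3) for every $\varphi\in\Phi'_S$ with $\varphi(S')\subseteq S'$ there exists $\varphi'\in\Phi'_{S'}$ with $\varphi'(s)=\varphi(s)$ for all $s\in S'$. *)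

theory Defs
  imports "HOL-Library.FuncSet"
begin

text \<open>Functions S -> S are represented extensionally
  (elements of S ->E S, i.e. undefined outside S), so that distinct
  representations correspond to distinct mathematical functions.\<close>

type_synonym 'a machine = "'a set \<times> ('a \<Rightarrow> 'a) set"

definition is_machine :: "'a machine \<Rightarrow> bool" where
  "is_machine M \<longleftrightarrow> snd M \<subseteq> fst M \<rightarrow>\<^sub>E fst M"

definition functional_reduction :: "'a machine \<Rightarrow> 'a machine \<Rightarrow> bool" where
  "functional_reduction M2 M1 \<longleftrightarrow> fst M2 = fst M1 \<and> snd M2 \<subseteq> snd M1"

definition state_reduction :: "'a machine \<Rightarrow> 'a machine \<Rightarrow> bool" where
  "state_reduction M' M \<longleftrightarrow>
     fst M' \<subseteq> fst M \<and>
     (\<forall>\<phi>'\<in>snd M'. \<exists>\<phi>\<in>snd M. \<forall>s\<in>fst M'. \<phi>' s = \<phi> s) \<and>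
     (\<forall>\<phi>\<in>snd M. \<phi> ` fst M' \<subseteq> fst M' \<longrightarrow> (\<exists>\<phi>'\<in>snd M'. \<forall>s\<in>fst M'. \<phi>' s = \<phi> s))"

end

theory Submission
  imports Defs
begin

theorem lemma3:
  fixes A C :: "'a machine"
  assumes "is_machine A" and "is_machine C"
  shows "(\<exists>B. is_machine B \<and> functional_reduction B A \<and> state_reduction C B) \<longleftrightarrow>
         (\<exists>B'. is_machine B' \<and> state_reduction B' A \<and> functional_reduction C B')"
proof
  assume "\<exists>B. is_machine B \<and> functional_reduction B A \<and> state_reduction C B"
  then obtain B where B: "is_machine B" "functional_reduction B A" "state_reduction C B" by blast
  define R where "R = {restrict \<phi> (fst C) | \<phi>. \<phi> \<in> snd A \<and> \<phi> ` fst C \<subseteq> fst C}"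
  define B' where "B' = (fst C, snd C \<union> R)"
  have "R \<subseteq> fst C \<rightarrow>\<^sub>E fst C" unfolding R_def by auto
  hence "is_machine B'"
    using assms(2) unfolding B'_def is_machine_def by auto
  moreover have "state_reduction B' A"
    unfolding state_reduction_def
  proof (intro conjI ballI impI)
    show "fst B' \<subseteq> fst A" using B unfolding state_reduction_def functional_reduction_def B'_def by auto
  next
    fix \<phi>' assume h: "\<phi>' \<in> snd B'"
    show "\<exists>\<phi>\<in>snd A. \<forall>s\<in>fst B'. \<phi>' s = \<phi> s"
    proof (cases "\<phi>' \<in> snd C")
      case True
      then obtain \<phi> where "\<phi> \<in> snd B" "\<forall>s\<in>fst C. \<phi>' s = \<phi> s"
        using B(3) unfolding state_reduction_def by blast
      moreover have "snd B \<subseteq> snd A" using B(2) unfolding functional_reduction_def by blast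
      ultimately show ?thesis unfolding B'_def by auto
    next
      case False
      then have "\<phi>' \<in> R" using h unfolding B'_def by auto
      then obtain \<phi> where "\<phi> \<in> snd A" "\<phi>' = restrict \<phi> (fst C)" unfolding R_def by blast
      then show ?thesis unfolding B'_def by auto
    qed
  next
    fix \<phi> assume "\<phi> \<in> snd A" "\<phi> ` fst B' \<subseteq> fst B'"
    hence "restrict \<phi> (fst C) \<in> R" unfolding R_def B'_def by auto
    thus "\<exists>\<phi>'\<in>snd B'. \<forall>s\<in>fst B'. \<phi>' s = \<phi> s" unfolding B'_def by (intro bexI[of _ "restrict \<phi> (fst C)"]) auto
  qed
  moreover have "functional_reduction C B'"
    unfolding functional_reduction_def B'_def by auto
  ultimately show "\<exists>B'. is_machine B' \<and> state_reduction B' A \<and> functional_reduction C B'" by blast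
next
  assume "\<exists>B'. is_machine B' \<and> state_reduction B' A \<and> functional_reduction C B'"
  then obtain B' where B: "is_machine B'" "state_reduction B' A" "functional_reduction C B'" by blast
  define B where "B = (fst A, {\<phi>\<in>snd A. \<exists>\<psi>\<in>snd C. \<forall>s\<in>fst C. \<psi> s = \<phi> s})"
  have "is_machine B"
    using assms(1) unfolding B_def is_machine_def by auto
  moreover have "functional_reduction B A"
    unfolding functional_reduction_def B_def by auto
  moreover have "state_reduction C B"
    unfolding state_reduction_def
  proof (intro conjI ballI impI)
    show "fst C \<subseteq> fst B" using B unfolding state_reduction_def functional_reduction_def B_def by auto
  next
    fix \<psi> assume h: "\<psi> \<in> snd C"
    hence "\<psi> \<in> snd B'" using B(3) unfolding functional_reduction_def by blast
    then obtain \<phi> where "\<phi> \<in> snd A" "\<forall>s\<in>fst B'. \<psi> s = \<phi> s"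
      using B(2) unfolding state_reduction_def by blast
    moreover have "fst C = fst B'" using B(3) unfolding functional_reduction_def by blast
    ultimately show "\<exists>\<phi>\<in>snd B. \<forall>s\<in>fst C. \<psi> s = \<phi> s" using h unfolding B_def by auto
  next
    fix \<phi> assume "\<phi> \<in> snd B" "\<phi> ` fst C \<subseteq> fst C"
    thus "\<exists>\<phi>'\<in>snd C. \<forall>s\<in>fst C. \<phi>' s = \<phi> s" unfolding B_def by auto
  qed
  ultimately show "\<exists>B. is_machine B \<and> functional_reduction B A \<and> state_reduction C B" by blast
qed

end
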